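(* For each natural number $n\ge 1$, $\mathrm{Log}_{<1}(\mathbb{R}^{n+1})\subsetneq \mathrm{Log}_{<1}(\mathbb{R}^n)$; that is, $\mathrm{Log}_{<1}(\mathbb{R}^n)$ strictly contains $\mathrm{Log}_{<1}(\mathbb{R}^{n+1})$.
   Context: Modal formulas are built from a countable set of propositional variables using $\bot$, $\to$ and one unary modality $\lozenge$. A frame is a pair $(X,R)$; a valuation assigns subsets of $X$ to variables; $x\models\lozenge\varphi$ iff there is $y$ with $xRy$ and $y\models\varphi$. A formula is valid in a frame if true at every point under every valuation. For a metric space $(X,d)$, $\mathrm{Log}_{<1}(X)$ is the set of modal formulas valid in the frame $(X,R_{<1})$, where $xR_{<1}y$ iff $d(x,y)<1$. $\mathbb{R}^n$ carries the Euclidean metric. *)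

theory Defs
  imports "HOL-Analysis.Analysis"
begin

datatype fm = Var nat | Bot | Imp fm fm | Dia fm

fun sat :: "'a set \<Rightarrow> ('a \<Rightarrow> 'a \<Rightarrow> bool) \<Rightarrow> (nat \<Rightarrow> 'a set) \<Rightarrow> 'a \<Rightarrow> fm \<Rightarrow> bool" where
  "sat X R V x (Var p) = (x \<in> V p)"
| "sat X R V x Bot = False"
| "sat X R V x (Imp a b) = (sat X R V x a \<longrightarrow> sat X R V x b)"
| "sat X R V x (Dia a) = (\<exists>y\<in>X. R x y \<and> sat X R V y a)"

definition valid_in :: "'a set \<Rightarrow> ('a \<Rightarrow> 'a \<Rightarrow> bool) \<Rightarrow> fm \<Rightarrow> bool" where
  "valid_in X R \<phi> \<longleftrightarrow> (\<forall>V. (\<forall>p. V p \<subseteq> X) \<longrightarrow> (\<forall>x\<in>X. sat X R V x \<phi>))"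

definition Log_lt1 :: "'a set \<Rightarrow> ('a \<Rightarrow> 'a \<Rightarrow> real) \<Rightarrow> fm set" where
  "Log_lt1 X d = {\<phi>. valid_in X (\<lambda>x y. d x y < 1) \<phi>}"

definition Rn :: "nat \<Rightarrow> (nat \<Rightarrow> real) set" where
  "Rn n = {x. \<forall>i\<ge>n. x i = 0}"

definition eucl_dist :: "nat \<Rightarrow> (nat \<Rightarrow> real) \<Rightarrow> (nat \<Rightarrow> real) \<Rightarrow> real" where
  "eucl_dist n x y = sqrt (\<Sum>i<n. (x i - y i)\<^sup>2)"

end

theory Submission
  imports Defs "HOL-Library.Function_Algebras"
begin


definition proj :: "nat \<Rightarrow> (nat \<Rightarrow> real) \<Rightarrow> (nat \<Rightarrow> real)" where
  "proj n x = (\<lambda>i. if i < n then x i else 0)"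

lemma proj_Rn: "proj n x \<in> Rn n"
  by (auto simp: proj_def Rn_def)

lemma dist_proj: "eucl_dist n (proj n x) (proj n y) = eucl_dist n x y"
  unfolding eucl_dist_def proj_def by simp

lemma dist_proj2: "eucl_dist n (proj n x) z = eucl_dist n x z"
  unfolding eucl_dist_def proj_def by simp

lemma dist_mono_Suc: "eucl_dist n x y \<le> eucl_dist (Suc n) x y"
  unfolding eucl_dist_def by (simp add: add_nonneg_nonneg)

lemma proj_id: "z \<in> Rn n \<Longrightarrow> proj n z = z"
  by (auto simp: proj_def Rn_def fun_eq_iff)

lemma pmorph:
  assumes "x \<in> Rn (Suc n)"
  shows "sat (Rn (Suc n)) (\<lambda>x y. eucl_dist (Suc n) x y < 1) (\<lambda>p. {x \<in> Rn (Suc n). proj n x \<in> V p}) x \<phi>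
     \<longleftrightarrow> sat (Rn n) (\<lambda>x y. eucl_dist n x y < 1) V (proj n x) \<phi>"
  using assms
proof (induction \<phi> arbitrary: x)
  case (Dia \<phi>)
  show ?case
  proof
    assume "sat (Rn (Suc n)) (\<lambda>x y. eucl_dist (Suc n) x y < 1) (\<lambda>p. {x \<in> Rn (Suc n). proj n x \<in> V p}) x (Dia \<phi>)"
    then obtain y where y: "y \<in> Rn (Suc n)" "eucl_dist (Suc n) x y < 1"
      "sat (Rn (Suc n)) (\<lambda>x y. eucl_dist (Suc n) x y < 1) (\<lambda>p. {x \<in> Rn (Suc n). proj n x \<in> V p}) y \<phi>"
      by auto
    have "eucl_dist n (proj n x) (proj n y) < 1"
      using dist_proj dist_mono_Suc y(2) by (metis order.strict_trans1)
    then show "sat (Rn n) (\<lambda>x y. eucl_dist n x y < 1) V (proj n x) (Dia \<phi>)"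
      using Dia.IH[OF y(1)] y(3) proj_Rn by auto
  next
    assume "sat (Rn n) (\<lambda>x y. eucl_dist n x y < 1) V (proj n x) (Dia \<phi>)"
    then obtain z where z: "z \<in> Rn n" "eucl_dist n (proj n x) z < 1"
      "sat (Rn n) (\<lambda>x y. eucl_dist n x y < 1) V z \<phi>" by auto
    define y where "y = z(n := x n)"
    have yR: "y \<in> Rn (Suc n)" using z(1) by (auto simp: Rn_def y_def)
    have py: "proj n y = z" using z(1) by (auto simp: proj_def Rn_def fun_eq_iff y_def)
    have "eucl_dist (Suc n) x y = eucl_dist n x z"
      unfolding eucl_dist_def y_def by simp
    then have "eucl_dist (Suc n) x y < 1" using z(2) dist_proj2 by metis
    then show "sat (Rn (Suc n)) (\<lambda>x y. eucl_dist (Suc n) x y < 1) (\<lambda>p. {x \<in> Rn (Suc n). proj n x \<in> V p}) x (Dia \<phi>)"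
      using Dia.IH[OF yR] py z(3) yR by auto
  qed
qed auto

lemma incl:
  "Log_lt1 (Rn (Suc n)) (eucl_dist (Suc n)) \<subseteq> Log_lt1 (Rn n) (eucl_dist n)"
proof
  fix \<phi> assume "\<phi> \<in> Log_lt1 (Rn (Suc n)) (eucl_dist (Suc n))"
  then have v: "valid_in (Rn (Suc n)) (\<lambda>x y. eucl_dist (Suc n) x y < 1) \<phi>"
    by (simp add: Log_lt1_def)
  show "\<phi> \<in> Log_lt1 (Rn n) (eucl_dist n)"
    unfolding Log_lt1_def valid_in_def
  proof (intro CollectI allI impI ballI)
    fix V :: "nat \<Rightarrow> (nat \<Rightarrow> real) set" and x assume "\<forall>p. V p \<subseteq> Rn n" "x \<in> Rn n"
    have xs: "x \<in> Rn (Suc n)" using \<open>x \<in> Rn n\<close> by (auto simp: Rn_def)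
    have "sat (Rn (Suc n)) (\<lambda>x y. eucl_dist (Suc n) x y < 1) (\<lambda>p. {x \<in> Rn (Suc n). proj n x \<in> V p}) x \<phi>"
      using v xs unfolding valid_in_def by auto
    then show "sat (Rn n) (\<lambda>x y. eucl_dist n x y < 1) V x \<phi>"
      using pmorph[OF xs] proj_id[OF \<open>x \<in> Rn n\<close>] by simp
  qed
qed


lemma dist_L2: "eucl_dist N x y = L2_set (\<lambda>i. x i - y i) {..<N}"
  by (simp add: eucl_dist_def L2_set_def)

lemma dist_tri: "eucl_dist N x z \<le> eucl_dist N x y + eucl_dist N y z"
proof -
  have "eucl_dist N x z = L2_set (\<lambda>i. (x i - y i) + (y i - z i)) {..<N}"
    by (simp add: dist_L2)
  also have "\<dots> \<le> eucl_dist N x y + eucl_dist N y z"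
    unfolding dist_L2 by (rule L2_set_triangle_ineq)
  finally show ?thesis .
qed

lemma dist_nonneg: "eucl_dist N x y \<ge> 0"
  by (simp add: eucl_dist_def sum_nonneg)

lemma sqrt_scale: "sqrt (\<Sum>i<N. (c * f i)\<^sup>2) = \<bar>c\<bar> * sqrt (\<Sum>i<N. (f i)\<^sup>2)"
proof -
  have "(\<Sum>i<N. (c * f i)\<^sup>2) = c\<^sup>2 * (\<Sum>i<N. (f i)\<^sup>2)"
    by (simp add: power_mult_distrib sum_distrib_left)
  then show ?thesis by (simp add: real_sqrt_mult)
qed

lemma dist_interp1: "eucl_dist N x (\<lambda>i. x i + t * (y i - x i)) = \<bar>t\<bar> * eucl_dist N x y"
proof -
  have "eucl_dist N x (\<lambda>i. x i + t * (y i - x i)) = sqrt (\<Sum>i<N. (t * (x i - y i))\<^sup>2)"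
    unfolding eucl_dist_def by (simp add: algebra_simps)
  then show ?thesis by (simp add: sqrt_scale eucl_dist_def)
qed

lemma dist_interp2: "eucl_dist N (\<lambda>i. x i + t * (y i - x i)) y = \<bar>1 - t\<bar> * eucl_dist N x y"
proof -
  have "eucl_dist N (\<lambda>i. x i + t * (y i - x i)) y = sqrt (\<Sum>i<N. ((1 - t) * (x i - y i))\<^sup>2)"
    unfolding eucl_dist_def by (simp add: algebra_simps)
  then show ?thesis by (simp add: sqrt_scale eucl_dist_def)
qed

fun dias :: "nat \<Rightarrow> fm \<Rightarrow> fm" where
  "dias 0 \<phi> = \<phi>"
| "dias (Suc k) \<phi> = Dia (dias k \<phi>)"

lemma sat_dias:
  assumes "k \<ge> 1" "x \<in> Rn N"
  shows "sat (Rn N) (\<lambda>x y. eucl_dist N x y < 1) V x (dias k \<phi>) \<longleftrightarrow>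
    (\<exists>y\<in>Rn N. eucl_dist N x y < real k \<and> sat (Rn N) (\<lambda>x y. eucl_dist N x y < 1) V y \<phi>)"
  using assms
proof (induction k arbitrary: x)
  case 0 then show ?case by simp
next
  case (Suc k)
  show ?case
  proof (cases "k = 0")
    case True then show ?thesis by simp
  next
    case False
    then have IH: "\<And>x. x \<in> Rn N \<Longrightarrow> sat (Rn N) (\<lambda>x y. eucl_dist N x y < 1) V x (dias k \<phi>) \<longleftrightarrow>
      (\<exists>y\<in>Rn N. eucl_dist N x y < real k \<and> sat (Rn N) (\<lambda>x y. eucl_dist N x y < 1) V y \<phi>)"
      using Suc.IH by simp
    show ?thesis
    proof
      assume "sat (Rn N) (\<lambda>x y. eucl_dist N x y < 1) V x (dias (Suc k) \<phi>)"
      then obtain z where z: "z \<in> Rn N" "eucl_dist N x z < 1"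
        "sat (Rn N) (\<lambda>x y. eucl_dist N x y < 1) V z (dias k \<phi>)" by auto
      then obtain y where y: "y \<in> Rn N" "eucl_dist N z y < real k"
        "sat (Rn N) (\<lambda>x y. eucl_dist N x y < 1) V y \<phi>" using IH by blast
      have "eucl_dist N x y < real (Suc k)"
        using dist_tri[of N x y z] z(2) y(2) by simp
      then show "\<exists>y\<in>Rn N. eucl_dist N x y < real (Suc k) \<and> sat (Rn N) (\<lambda>x y. eucl_dist N x y < 1) V y \<phi>"
        using y by blast
    next
      assume "\<exists>y\<in>Rn N. eucl_dist N x y < real (Suc k) \<and> sat (Rn N) (\<lambda>x y. eucl_dist N x y < 1) V y \<phi>"
      then obtain y where y: "y \<in> Rn N" "eucl_dist N x y < real (Suc k)"
        "sat (Rn N) (\<lambda>x y. eucl_dist N x y < 1) V y \<phi>" by blast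
      define t :: real where "t = 1 / real (Suc k)"
      define z where "z = (\<lambda>i. x i + t * (y i - x i))"
      have zR: "z \<in> Rn N" using y(1) Suc.prems(2) by (auto simp: Rn_def z_def)
      have t0: "0 < t" "t < 1" using False by (auto simp: t_def)
      have d1: "eucl_dist N x z = t * eucl_dist N x y"
        unfolding z_def dist_interp1 using t0 by simp
      have d2: "eucl_dist N z y = (1 - t) * eucl_dist N x y"
        unfolding z_def dist_interp2 using t0 by simp
      have "t * eucl_dist N x y < t * real (Suc k)"
        using y(2) t0 by simp
      then have c1: "eucl_dist N x z < 1" using d1 by (simp add: t_def)
      have "(1 - t) * eucl_dist N x y < (1 - t) * real (Suc k)"
        using y(2) t0 by simp
      also have "(1 - t) * real (Suc k) = real k" by (simp add: t_def field_simps)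
      finally have c2: "eucl_dist N z y < real k" using d2 by simp
      have "sat (Rn N) (\<lambda>x y. eucl_dist N x y < 1) V z (dias k \<phi>)"
        using IH[OF zR] c2 y by blast
      then show "sat (Rn N) (\<lambda>x y. eucl_dist N x y < 1) V x (dias (Suc k) \<phi>)"
        using zR c1 by auto
    qed
  qed
qed


definition ip :: "nat \<Rightarrow> (nat \<Rightarrow> real) \<Rightarrow> (nat \<Rightarrow> real) \<Rightarrow> real" where
  "ip n x y = (\<Sum>i<n. x i * y i)"

definition fscale :: "real \<Rightarrow> (nat \<Rightarrow> real) \<Rightarrow> (nat \<Rightarrow> real)" where
  "fscale c f = (\<lambda>i. c * f i)"

interpretation fvs: vector_space fscale
  by unfold_locales (auto simp: fscale_def fun_eq_iff algebra_simps)

lemma sum_fun_apply: "(\<Sum>v\<in>A. (f v :: nat \<Rightarrow> real)) i = (\<Sum>v\<in>A. f v i)"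
  by (induction A rule: infinite_finite_induct) auto

lemma Rn_span: "Rn n \<subseteq> fvs.span ((\<lambda>j. (\<lambda>i. if i = j then 1 else 0)) ` {..<n})"
proof
  fix x assume x: "x \<in> Rn n"
  have "x = (\<Sum>j<n. fscale (x j) (\<lambda>i. if i = j then 1 else 0))"
  proof
    fix i
    show "x i = (\<Sum>j<n. fscale (x j) (\<lambda>i. if i = j then 1 else 0)) i"
      using x by (auto simp: sum_fun_apply fscale_def Rn_def if_distrib cong: if_cong)
  qed
  also have "\<dots> \<in> fvs.span ((\<lambda>j. (\<lambda>i. if i = j then 1 else 0)) ` {..<n})"
    by (intro fvs.span_sum fvs.span_scale fvs.span_base) auto
  finally show "x \<in> fvs.span ((\<lambda>j. (\<lambda>i. if i = j then 1 else 0)) ` {..<n})" .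
qed

lemma dep_big:
  assumes "finite S" "S \<subseteq> Rn n" "card S > n"
  shows "\<exists>u. (\<exists>v\<in>S. u v \<noteq> 0) \<and> (\<forall>i. (\<Sum>v\<in>S. u v * v i) = 0)"
proof -
  have "fvs.dependent S"
  proof (rule ccontr)
    assume "\<not> fvs.dependent S"
    then have "card S \<le> card ((\<lambda>j. (\<lambda>i. if i = j then 1 else (0::real))) ` {..<n})"
      using fvs.independent_span_bound[of "(\<lambda>j. (\<lambda>i. if i = j then 1 else 0)) ` {..<n}" S]
        Rn_span assms(2) by blast
    also have "\<dots> \<le> n" using card_image_le[of "{..<n}"] by simp
    finally show False using assms(3) by simp
  qed
  then obtain u where "\<exists>v\<in>S. u v \<noteq> 0" "(\<Sum>v\<in>S. fscale (u v) v) = 0"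
    using fvs.dependent_finite[OF assms(1)] by blast
  then show ?thesis
    by (metis (no_types, lifting) fscale_def sum.cong sum_fun_apply zero_fun_def)
qed

lemma neg_bound:
  assumes fin: "finite S" and SR: "S \<subseteq> Rn n"
    and neg: "\<forall>p\<in>S. \<forall>q\<in>S. p \<noteq> q \<longrightarrow> ip n p q < 0"
  shows "card S \<le> Suc n"
proof (rule ccontr)
  assume "\<not> card S \<le> Suc n"
  then have cS: "card S > Suc n" by simp
  then obtain z where zS: "z \<in> S" by (metis card.empty ex_in_conv not_less0)
  define S' where "S' = S - {z}"
  have fS': "finite S'" using fin by (simp add: S'_def)
  have cS': "card S' > n" using cS zS fin by (simp add: S'_def)
  have S'R: "S' \<subseteq> Rn n" using SR by (auto simp: S'_def)
  obtain u0 where u0: "\<exists>v\<in>S'. u0 v \<noteq> 0" "\<forall>i. (\<Sum>v\<in>S'. u0 v * v i) = 0"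
    using dep_big[OF fS' S'R cS'] by blast
  then obtain v0 where v0: "v0 \<in> S'" "u0 v0 \<noteq> 0" by blast
  define u where "u = (if u0 v0 > 0 then u0 else (\<lambda>v. - u0 v))"
  have uv0: "u v0 > 0" using v0 by (auto simp: u_def)
  have usum: "\<forall>i. (\<Sum>v\<in>S'. u v * v i) = 0"
    using u0(2) by (auto simp: u_def sum_negf)
  define P where "P = {v\<in>S'. u v > 0}"
  define Q where "Q = {v\<in>S'. u v < 0}"
  define Z where "Z = {v\<in>S'. u v = 0}"
  have fP: "finite P" and fQ: "finite Q" and fZ: "finite Z" using fS' by (auto simp: P_def Q_def Z_def)
  have S'eq: "S' = P \<union> (Q \<union> Z)" by (auto simp: P_def Q_def Z_def)
  define W where "W i = (\<Sum>p\<in>P. u p * p i)" for i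
  have W2: "W i = (\<Sum>q\<in>Q. (- u q) * q i)" for i
  proof -
    have "0 = (\<Sum>v\<in>S'. u v * v i)" using usum by simp
    also have "\<dots> = (\<Sum>v\<in>P. u v * v i) + ((\<Sum>v\<in>Q. u v * v i) + (\<Sum>v\<in>Z. u v * v i))"
    proof -
      have d1: "P \<inter> (Q \<union> Z) = {}" "Q \<inter> Z = {}" by (auto simp: P_def Q_def Z_def)
      show ?thesis unfolding S'eq
        using sum.union_disjoint[OF fP _ d1(1), of "\<lambda>v. u v * v i"]
          sum.union_disjoint[OF fQ fZ d1(2), of "\<lambda>v. u v * v i"] fQ fZ by simp
    qed
    also have "(\<Sum>v\<in>Z. u v * v i) = 0" by (simp add: Z_def)
    finally show ?thesis by (simp add: W_def sum_negf)
  qed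
  have "ip n W W = (\<Sum>i<n. (\<Sum>p\<in>P. u p * p i) * (\<Sum>q\<in>Q. (- u q) * q i))"
    unfolding ip_def using W2 W_def by simp
  also have "\<dots> = (\<Sum>i<n. \<Sum>p\<in>P. \<Sum>q\<in>Q. (u p * p i) * ((- u q) * q i))"
    by (simp add: sum_product)
  also have "\<dots> = (\<Sum>p\<in>P. \<Sum>q\<in>Q. \<Sum>i<n. (u p * p i) * ((- u q) * q i))"
    by (subst sum.swap, subst (2) sum.swap, simp)
  also have "\<dots> = (\<Sum>p\<in>P. \<Sum>q\<in>Q. (u p * (- u q)) * ip n p q)"
    unfolding ip_def by (simp add: sum_distrib_left mult_ac)
  also have "\<dots> \<le> 0"
  proof (intro sum_nonpos)
    fix p q assume p: "p \<in> P" and q: "q \<in> Q"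
    have "p \<noteq> q" using p q by (auto simp: P_def Q_def)
    then have "ip n p q < 0" using neg p q by (auto simp: P_def Q_def S'_def)
    moreover have "u p * (- u q) > 0" using p q by (auto simp: P_def Q_def mult_pos_neg)
    ultimately show "u p * (- u q) * ip n p q \<le> 0"
      by (simp add: mult_pos_neg less_imp_le mult_nonpos_nonpos del: mult_minus_right)
  qed
  finally have "ip n W W \<le> 0" .
  moreover have "ip n W W = (\<Sum>i<n. (W i)\<^sup>2)" by (simp add: ip_def power2_eq_square)
  ultimately have "(\<Sum>i<n. (W i)\<^sup>2) = 0" by (metis antisym sum_nonneg zero_le_power2)
  then have W0: "\<forall>i<n. W i = 0" by (simp add: sum_nonneg_eq_0_iff)
  have "ip n W z = 0" using W0 by (simp add: ip_def)
  moreover have "ip n W z = (\<Sum>p\<in>P. u p * ip n p z)"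
    unfolding ip_def W_def by (simp add: sum_distrib_left sum_distrib_right mult_ac, subst sum.swap, simp)
  moreover have "(\<Sum>p\<in>P. u p * ip n p z) < 0"
  proof -
    have "(\<Sum>p\<in>P. u p * ip n p z) < (\<Sum>p\<in>P. 0)"
    proof (rule sum_strict_mono[OF fP])
      show "P \<noteq> {}" using v0(1) uv0 by (auto simp: P_def)
    next
      fix p assume p: "p \<in> P"
      then have "p \<noteq> z" "p \<in> S" by (auto simp: P_def S'_def)
      then have "ip n p z < 0" using neg zS by auto
      then show "u p * ip n p z < 0" using p by (simp add: P_def mult_pos_neg)
    qed
    then show ?thesis by simp
  qed
  ultimately show False by simp
qed



lemma exists_km:
  assumes "(e::real) > 0"
  shows "\<exists>k m::nat. k \<ge> 1 \<and> 2 * real k ^ 2 \<le> real m ^ 2 \<and> real m ^ 2 < (2 + e) * real k ^ 2"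
proof -
  obtain k0 :: nat where k0: "4 / e < real k0" using reals_Archimedean2 by blast
  define k where "k = max 1 k0"
  have k1: "k \<ge> 1" and kk: "4 / e \<le> real k" using k0 by (auto simp: k_def)
  have ek: "e * real k \<ge> 4" using kk assms by (simp add: field_simps)
  define m where "m = nat \<lceil>sqrt 2 * real k\<rceil>"
  have s2: "sqrt 2 < 1.5"
    by (rule real_less_lsqrt) (auto simp: power2_eq_square)
  have s0: "sqrt 2 * real k \<ge> 0" by simp
  have mc: "real m = of_int \<lceil>sqrt 2 * real k\<rceil>"
    unfolding m_def using s0 by (simp add: of_nat_nat)
  have m1: "real m \<ge> sqrt 2 * real k" unfolding mc by (rule le_of_int_ceiling)
  have m2: "real m < sqrt 2 * real k + 1" unfolding mc using ceiling_correct[of "sqrt 2 * real k"] by linarith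
  have "2 * real k ^ 2 = (sqrt 2 * real k)^2" by (simp add: power_mult_distrib)
  also have "\<dots> \<le> real m ^ 2" using m1 s0 by (simp add: power_mono)
  finally have A: "2 * real k ^ 2 \<le> real m ^ 2" .
  have "real m ^ 2 < (sqrt 2 * real k + 1)^2" using m2 by (simp add: power_strict_mono)
  also have "\<dots> = 2 * real k ^ 2 + 2 * sqrt 2 * real k + 1" by (simp add: power2_eq_square algebra_simps)
  also have "\<dots> \<le> 2 * real k ^ 2 + 4 * real k"
  proof -
    have "2 * sqrt 2 * real k \<le> 3 * real k" using s2 k1 by (intro mult_right_mono) auto
    moreover have "real k \<ge> 1" using k1 by simp
    ultimately show ?thesis by linarith
  qed
  also have "\<dots> \<le> (2 + e) * real k ^ 2"
    using ek k1 by (simp add: power2_eq_square algebra_simps mult_right_mono)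
  finally show ?thesis using A k1 by blast
qed


lemma sum_if1:
  assumes "i < N"
  shows "(\<Sum>t<N. if t = i then A else B) = A + (real N - 1) * (B::real)"
proof -
  have "(\<Sum>t<N. if t = i then A else B) = (\<Sum>t<N. B + (if t = i then A - B else 0))"
    by (rule sum.cong) auto
  also have "\<dots> = real N * B + (A - B)" using assms by (simp add: sum.distrib)
  finally show ?thesis by (simp add: algebra_simps)
qed

lemma config:
  assumes N1: "N \<ge> 1"
  shows "\<exists>k m::nat. k \<ge> 1 \<and> 2 * real k ^ 2 \<le> real m ^ 2 \<and>
    (\<exists>Y. (\<forall>i\<le>N. Y i \<in> Rn N \<and> eucl_dist N (\<lambda>_. 0) (Y i) < real k) \<and>
         (\<forall>i\<le>N. \<forall>j\<le>N. i \<noteq> j \<longrightarrow> real m \<le> eucl_dist N (Y i) (Y j)))"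
proof -
  define a :: real where "a = 1 / (2 * real N)"
  define r2 :: real where "r2 = 1 - 3 / (4 * real N)"
  define c where "c = sqrt (r2 / real N)"
  have Npos: "real N \<ge> 1" using N1 by simp
  have r2pos: "r2 > 0" using Npos by (simp add: r2_def field_simps)
  have cpos: "c > 0" using r2pos Npos by (simp add: c_def)
  have c2: "c\<^sup>2 = r2 / real N" using r2pos Npos by (simp add: c_def)
  have Nc2: "real N * c\<^sup>2 = r2" using c2 Npos by simp
  have Na: "real N * a = 1/2" using Npos by (simp add: a_def)
  define v where "v i t = (if t < N then (if i < N then (if t = i then 1 else 0) - a else - c) else 0)" for i t
  have F1: "(\<Sum>t<N. (v i t)\<^sup>2) = r2" if "i \<le> N" for i
  proof (cases "i < N")
    case True
    have "(\<Sum>t<N. (v i t)\<^sup>2) = (\<Sum>t<N. if t = i then (1 - a)\<^sup>2 else a\<^sup>2)"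
      by (rule sum.cong) (auto simp: v_def True)
    also have "\<dots> = (1 - a)\<^sup>2 + (real N - 1) * a\<^sup>2" using True by (rule sum_if1)
    also have "\<dots> = r2" using Npos unfolding a_def r2_def by (simp add: field_simps power2_eq_square)
    finally show ?thesis .
  next
    case False
    then have "i = N" using that by simp
    then have "(\<Sum>t<N. (v i t)\<^sup>2) = (\<Sum>t<N. c\<^sup>2)" by (intro sum.cong) (auto simp: v_def)
    also have "\<dots> = r2" using Nc2 by simp
    finally show ?thesis .
  qed
  have F2: "(\<Sum>t<N. (v i t - v j t)\<^sup>2) = 2" if "i < N" "j < N" "i \<noteq> j" for i j
  proof -
    have "(\<Sum>t<N. (v i t - v j t)\<^sup>2) = (\<Sum>t<N. (if t = i then 1 else 0) + (if t = j then 1 else (0::real)))"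
      by (rule sum.cong) (use that in \<open>auto simp: v_def\<close>)
    also have "\<dots> = 2" using that by (simp add: sum.distrib)
    finally show ?thesis .
  qed
  have F3: "(\<Sum>t<N. (v i t - v N t)\<^sup>2) = 2 * r2 + c" if "i < N" for i
  proof -
    have "(\<Sum>t<N. (v i t - v N t)\<^sup>2) = (\<Sum>t<N. if t = i then (1 - a + c)\<^sup>2 else (c - a)\<^sup>2)"
      by (rule sum.cong) (use that in \<open>auto simp: v_def power2_commute\<close>)
    also have "\<dots> = (1 - a + c)\<^sup>2 + (real N - 1) * (c - a)\<^sup>2" using that by (rule sum_if1)
    also have "\<dots> = ((1 - a)\<^sup>2 + (real N - 1) * a\<^sup>2) + real N * c\<^sup>2 + 2 * c * (1 - real N * a)"
      by (simp add: power2_eq_square algebra_simps)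
    also have "(1 - a)\<^sup>2 + (real N - 1) * a\<^sup>2 = r2"
      using Npos unfolding a_def r2_def by (simp add: field_simps power2_eq_square)
    finally show ?thesis using Nc2 Na by simp
  qed
  define \<delta> where "\<delta> = min c (3 / (2 * real N))"
  have dpos: "\<delta> > 0" using cpos Npos by (simp add: \<delta>_def)
  define D2 where "D2 = 2 * r2 + \<delta>"
  have D2pos: "D2 > 0" using r2pos dpos by (simp add: D2_def)
  have Fd: "(\<Sum>t<N. (v i t - v j t)\<^sup>2) \<ge> D2" if "i \<le> N" "j \<le> N" "i \<noteq> j" for i j
  proof -
    have "i < N \<and> j < N \<or> i < N \<and> j = N \<or> i = N \<and> j < N" using that by auto
    then consider "i < N" "j < N" | "i < N" "j = N" | "i = N" "j < N" by argo
    then show ?thesis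
    proof cases
      case 1
      have "2 * r2 + 3 / (2 * real N) = 2" using Npos by (simp add: r2_def field_simps)
      then show ?thesis using F2[OF 1 that(3)] by (simp add: D2_def \<delta>_def)
    next
      case 2
      then show ?thesis using F3[of i] by (simp add: D2_def \<delta>_def)
    next
      case 3
      have "(\<Sum>t<N. (v i t - v j t)\<^sup>2) = (\<Sum>t<N. (v j t - v i t)\<^sup>2)"
        by (simp add: power2_commute)
      then show ?thesis using F3[of j] 3 by (simp add: D2_def \<delta>_def)
    qed
  qed
  obtain k m :: nat where km: "k \<ge> 1" "2 * real k ^ 2 \<le> real m ^ 2" "real m ^ 2 < (2 + \<delta> / r2) * real k ^ 2"
    using exists_km[of "\<delta> / r2"] dpos r2pos by auto
  define lam where "lam = real m / sqrt D2"
  have lpos: "lam \<ge> 0" using D2pos by (simp add: lam_def)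
  define Y where "Y i = (\<lambda>t. lam * v i t)" for i
  have YR: "Y i \<in> Rn N" for i by (auto simp: Rn_def Y_def v_def)
  have d0: "eucl_dist N (\<lambda>_. 0) (Y i) = lam * sqrt r2" if "i \<le> N" for i
  proof -
    have "eucl_dist N (\<lambda>_. 0) (Y i) = sqrt (\<Sum>t<N. (lam * v i t)\<^sup>2)"
      by (simp add: eucl_dist_def Y_def)
    also have "\<dots> = lam * sqrt r2" using sqrt_scale[of lam "v i" N] F1[OF that] lpos by simp
    finally show ?thesis .
  qed
  have "(lam * sqrt r2)\<^sup>2 = real m ^ 2 * r2 / D2"
    using r2pos D2pos by (simp add: lam_def power_mult_distrib power_divide)
  also have "\<dots> < real k ^ 2"
  proof -
    have "real m ^ 2 * r2 < (2 + \<delta> / r2) * real k ^ 2 * r2" using km(3) r2pos by simp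
    also have "\<dots> = real k ^ 2 * D2" using r2pos by (simp add: D2_def field_simps)
    finally show ?thesis using D2pos by (simp add: field_simps)
  qed
  finally have "(lam * sqrt r2)\<^sup>2 < (real k)\<^sup>2" .
  then have lk: "lam * sqrt r2 < real k"
    using power2_less_imp_less by fastforce
  have dd: "real m \<le> eucl_dist N (Y i) (Y j)" if "i \<le> N" "j \<le> N" "i \<noteq> j" for i j
  proof -
    have "eucl_dist N (Y i) (Y j) = sqrt (\<Sum>t<N. (lam * (v i t - v j t))\<^sup>2)"
      by (simp add: eucl_dist_def Y_def algebra_simps)
    also have "\<dots> = lam * sqrt (\<Sum>t<N. (v i t - v j t)\<^sup>2)"
      using sqrt_scale[of lam "\<lambda>t. v i t - v j t" N] lpos by simp
    also have "\<dots> \<ge> lam * sqrt D2"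
      using Fd[OF that] lpos by (intro mult_left_mono) auto
    finally show ?thesis using D2pos by (simp add: lam_def)
  qed
  show ?thesis
    using km(1,2) YR d0 lk dd by (intro exI[of _ k] exI[of _ m]) (auto intro!: exI[of _ Y])
qed



definition neg :: "fm \<Rightarrow> fm" where "neg a = Imp a Bot"
definition cj :: "fm \<Rightarrow> fm \<Rightarrow> fm" where "cj a b = neg (Imp a (neg b))"
fun conjs :: "fm list \<Rightarrow> fm" where
  "conjs [] = neg Bot"
| "conjs (a # l) = cj a (conjs l)"

lemma sat_neg[simp]: "sat X R V x (neg a) = (\<not> sat X R V x a)" by (simp add: neg_def)
lemma sat_cj[simp]: "sat X R V x (cj a b) = (sat X R V x a \<and> sat X R V x b)" by (simp add: cj_def)
lemma sat_conjs[simp]: "sat X R V x (conjs l) = (\<forall>a\<in>set l. sat X R V x a)"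
  by (induction l) auto

definition chi :: "nat \<Rightarrow> nat \<Rightarrow> nat \<Rightarrow> fm" where
  "chi M k m = neg (conjs (map (\<lambda>i. dias k (cj (Var i)
      (conjs (map (\<lambda>j. neg (dias m (Var j))) (filter (\<lambda>j. j \<noteq> i) [0..<M]))))) [0..<M]))"

lemma sat_chi: "sat X R V x (chi M k m) \<longleftrightarrow> \<not> (\<forall>i<M. sat X R V x (dias k (cj (Var i)
      (conjs (map (\<lambda>j. neg (dias m (Var j))) (filter (\<lambda>j. j \<noteq> i) [0..<M]))))))"
  by (simp add: chi_def atLeast0LessThan Bex_def)

lemma sat_inner: "sat X R V y (cj (Var i) (conjs (map (\<lambda>j. neg (dias m (Var j))) (filter (\<lambda>j. j \<noteq> i) [0..<M]))))
  \<longleftrightarrow> y \<in> V i \<and> (\<forall>j<M. j \<noteq> i \<longrightarrow> \<not> sat X R V y (dias m (Var j)))"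
  by auto

lemma dist_sq: "(eucl_dist N x y)\<^sup>2 = (\<Sum>t<N. (x t - y t)\<^sup>2)"
  by (simp add: eucl_dist_def sum_nonneg)

lemma chi_valid:
  assumes k1: "k \<ge> 1" and km: "2 * real k ^ 2 \<le> real m ^ 2"
  shows "valid_in (Rn n) (\<lambda>x y. eucl_dist n x y < 1) (chi (n + 2) k m)"
  unfolding valid_in_def
proof (intro allI impI ballI)
  fix V :: "nat \<Rightarrow> (nat \<Rightarrow> real) set" and x assume VR: "\<forall>p. V p \<subseteq> Rn n" and xR: "x \<in> Rn n"
  let ?R = "\<lambda>x y. eucl_dist n x y < 1"
  let ?M = "n + 2"
  have m1: "m \<ge> 1"
  proof (rule ccontr)
    assume "\<not> m \<ge> 1" then have "m = 0" by simp
    then show False using km k1 by simp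
  qed
  show "sat (Rn n) ?R V x (chi ?M k m)"
  proof (rule ccontr)
    assume "\<not> sat (Rn n) ?R V x (chi ?M k m)"
    then have H: "\<forall>i<?M. sat (Rn n) ?R V x (dias k (cj (Var i)
      (conjs (map (\<lambda>j. neg (dias m (Var j))) (filter (\<lambda>j. j \<noteq> i) [0..<?M])))))"
      using sat_chi[of "Rn n" ?R V x ?M k m] by blast
    have "\<forall>i. \<exists>y. i < ?M \<longrightarrow> (y \<in> Rn n \<and> eucl_dist n x y < real k \<and> y \<in> V i \<and>
       (\<forall>j<?M. j \<noteq> i \<longrightarrow> \<not> sat (Rn n) ?R V y (dias m (Var j))))"
    proof
      fix i show "\<exists>y. i < ?M \<longrightarrow> (y \<in> Rn n \<and> eucl_dist n x y < real k \<and> y \<in> V i \<and>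
       (\<forall>j<?M. j \<noteq> i \<longrightarrow> \<not> sat (Rn n) ?R V y (dias m (Var j))))"
      proof (cases "i < ?M")
        case True
        then obtain y where "y \<in> Rn n" "eucl_dist n x y < real k"
          "sat (Rn n) ?R V y (cj (Var i) (conjs (map (\<lambda>j. neg (dias m (Var j))) (filter (\<lambda>j. j \<noteq> i) [0..<?M]))))"
          using H sat_dias[OF k1 xR] by blast
        then show ?thesis unfolding sat_inner by blast
      qed simp
    qed
    then obtain Y where Y: "\<And>i. i < ?M \<Longrightarrow> Y i \<in> Rn n \<and> eucl_dist n x (Y i) < real k \<and> Y i \<in> V i \<and>
       (\<forall>j<?M. j \<noteq> i \<longrightarrow> \<not> sat (Rn n) ?R V (Y i) (dias m (Var j)))"
      by metis
    have far: "eucl_dist n (Y i) (Y j) \<ge> real m" if "i < ?M" "j < ?M" "i \<noteq> j" for i j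
    proof (rule ccontr)
      assume "\<not> eucl_dist n (Y i) (Y j) \<ge> real m"
      then have "sat (Rn n) ?R V (Y i) (dias m (Var j))"
        using sat_dias[OF m1, of "Y i" n V "Var j"] Y[OF that(1)] Y[OF that(2)] by auto
      then show False using Y[OF that(1)] that by auto
    qed
    define v where "v i = (\<lambda>t. if t < n then Y i t - x t else 0)" for i
    have vR: "v i \<in> Rn n" for i by (auto simp: v_def Rn_def)
    have nv: "(\<Sum>t<n. (v i t)\<^sup>2) < real k ^ 2" if "i < ?M" for i
    proof -
      have "(\<Sum>t<n. (v i t)\<^sup>2) = (eucl_dist n x (Y i))\<^sup>2"
        unfolding dist_sq by (intro sum.cong) (auto simp: v_def power2_commute)
      also have "\<dots> < real k ^ 2"
        using Y[OF that] dist_nonneg[of n x "Y i"] by (simp add: power_strict_mono)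
      finally show ?thesis .
    qed
    have dv: "(\<Sum>t<n. (v i t - v j t)\<^sup>2) \<ge> real m ^ 2" if "i < ?M" "j < ?M" "i \<noteq> j" for i j
    proof -
      have "(\<Sum>t<n. (v i t - v j t)\<^sup>2) = (eucl_dist n (Y i) (Y j))\<^sup>2"
        unfolding dist_sq by (intro sum.cong) (auto simp: v_def)
      also have "\<dots> \<ge> real m ^ 2"
        using far[OF that] by (simp add: power_mono)
      finally show ?thesis .
    qed
    have ipneg: "ip n (v i) (v j) < 0" if "i < ?M" "j < ?M" "i \<noteq> j" for i j
    proof -
      have "(\<Sum>t<n. (v i t - v j t)\<^sup>2) = (\<Sum>t<n. (v i t)\<^sup>2) + (\<Sum>t<n. (v j t)\<^sup>2) - 2 * ip n (v i) (v j)"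
        by (simp add: ip_def power2_eq_square algebra_simps sum.distrib sum_subtractf sum_distrib_left)
      then show ?thesis using nv[OF that(1)] nv[OF that(2)] dv[OF that] km by linarith
    qed
    have inj: "inj_on v {..<?M}"
    proof (rule inj_onI)
      fix i j assume ij: "i \<in> {..<?M}" "j \<in> {..<?M}" "v i = v j"
      show "i = j"
      proof (rule ccontr)
        assume "i \<noteq> j"
        then have "(\<Sum>t<n. (v i t - v j t)\<^sup>2) \<ge> real m ^ 2" using dv ij(1,2) by auto
        moreover have "real m ^ 2 > 0" using m1 by simp
        ultimately show False using ij(3) by simp
      qed
    qed
    have "card (v ` {..<?M}) \<le> Suc n"
    proof (rule neg_bound)
      show "v ` {..<?M} \<subseteq> Rn n" using vR by auto
      show "\<forall>p\<in>v ` {..<?M}. \<forall>q\<in>v ` {..<?M}. p \<noteq> q \<longrightarrow> ip n p q < 0"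
        using ipneg by blast
    qed simp
    moreover have "card (v ` {..<?M}) = n + 2" using card_image[OF inj] by simp
    ultimately show False by simp
  qed
qed

lemma chi_not_valid:
  assumes k1: "k \<ge> 1" and km: "2 * real k ^ 2 \<le> real m ^ 2"
    and YR: "\<forall>i\<le>Suc n. Y i \<in> Rn (Suc n) \<and> eucl_dist (Suc n) (\<lambda>_. 0) (Y i) < real k"
    and Yd: "\<forall>i\<le>Suc n. \<forall>j\<le>Suc n. i \<noteq> j \<longrightarrow> real m \<le> eucl_dist (Suc n) (Y i) (Y j)"
  shows "\<not> valid_in (Rn (Suc n)) (\<lambda>x y. eucl_dist (Suc n) x y < 1) (chi (n + 2) k m)"
proof
  let ?R = "\<lambda>x y. eucl_dist (Suc n) x y < 1"
  let ?M = "n + 2"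
  assume val: "valid_in (Rn (Suc n)) ?R (chi ?M k m)"
  have m1: "m \<ge> 1"
  proof (rule ccontr)
    assume "\<not> m \<ge> 1" then have "m = 0" by simp
    then show False using km k1 by simp
  qed
  define V where "V p = (if p < ?M then {Y p} else {})" for p
  have VR: "\<forall>p. V p \<subseteq> Rn (Suc n)" using YR by (auto simp: V_def)
  have zR: "(\<lambda>_. 0) \<in> Rn (Suc n)" by (simp add: Rn_def)
  have "sat (Rn (Suc n)) ?R V (\<lambda>_. 0) (chi ?M k m)" using val VR zR unfolding valid_in_def by blast
  moreover have "\<forall>i<?M. sat (Rn (Suc n)) ?R V (\<lambda>_. 0) (dias k (cj (Var i)
      (conjs (map (\<lambda>j. neg (dias m (Var j))) (filter (\<lambda>j. j \<noteq> i) [0..<?M])))))"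
  proof (intro allI impI)
    fix i assume i: "i < ?M"
    have Yi: "Y i \<in> Rn (Suc n)" "eucl_dist (Suc n) (\<lambda>_. 0) (Y i) < real k" using YR i by auto
    have "\<not> sat (Rn (Suc n)) ?R V (Y i) (dias m (Var j))" if "j < ?M" "j \<noteq> i" for j
    proof
      assume "sat (Rn (Suc n)) ?R V (Y i) (dias m (Var j))"
      then obtain w where "w \<in> Rn (Suc n)" "eucl_dist (Suc n) (Y i) w < real m" "w \<in> V j"
        using sat_dias[OF m1 Yi(1)] by auto
      then have "eucl_dist (Suc n) (Y i) (Y j) < real m" using that by (simp add: V_def)
      moreover have "i \<le> Suc n" "j \<le> Suc n" "i \<noteq> j" using i that by auto
      ultimately show False using Yd by force
    qed
    then have "sat (Rn (Suc n)) ?R V (Y i) (cj (Var i)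
      (conjs (map (\<lambda>j. neg (dias m (Var j))) (filter (\<lambda>j. j \<noteq> i) [0..<?M]))))"
      unfolding sat_inner using i by (simp add: V_def)
    then show "sat (Rn (Suc n)) ?R V (\<lambda>_. 0) (dias k (cj (Var i)
      (conjs (map (\<lambda>j. neg (dias m (Var j))) (filter (\<lambda>j. j \<noteq> i) [0..<?M])))))"
      using sat_dias[OF k1 zR] Yi by blast
  qed
  ultimately show False using sat_chi[of "Rn (Suc n)" ?R V "\<lambda>_. 0" ?M k m] by blast
qed

theorem proposition3p7:
  fixes n :: nat
  assumes "n \<ge> 1"
  shows "Log_lt1 (Rn (Suc n)) (eucl_dist (Suc n)) \<subset> Log_lt1 (Rn n) (eucl_dist n)"
proof -
  obtain k m Y where k1: "k \<ge> 1" and km: "2 * real k ^ 2 \<le> real m ^ 2"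
    and YR: "\<forall>i\<le>Suc n. Y i \<in> Rn (Suc n) \<and> eucl_dist (Suc n) (\<lambda>_. 0) (Y i) < real k"
    and Yd: "\<forall>i\<le>Suc n. \<forall>j\<le>Suc n. i \<noteq> j \<longrightarrow> real m \<le> eucl_dist (Suc n) (Y i) (Y j)"
    using config[of "Suc n"] by auto
  have "chi (n + 2) k m \<in> Log_lt1 (Rn n) (eucl_dist n)"
    using chi_valid[OF k1 km] by (simp add: Log_lt1_def)
  moreover have "chi (n + 2) k m \<notin> Log_lt1 (Rn (Suc n)) (eucl_dist (Suc n))"
    using chi_not_valid[OF k1 km YR Yd] by (simp add: Log_lt1_def)
  ultimately show ?thesis using incl by blast
qed

end
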